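(* Let $A,B,C\in\mathcal G$ be mutually adjacent. Then there is a star or a top containing $A$, $B$ and $C$.
   Context: $K$ is a (not necessarily commutative) field and $V$ is a left vector space over $K$ of arbitrary (possibly infinite) dimension with $\dim V>2$. $\mathcal G:=\{X\le V\mid X\cong V/X\}$, assumed nonempty. Two elements $X,Y\in\mathcal G$ are adjacent if $\dim((X+Y)/X)=\dim((X+Y)/Y)=1$. A star is a set $\mathcal G[M\rangle:=\{E\le V\mid M\le E,\ \dim(E/M)=1\}$, where $M\le V$ is a subspace for which some $X\in\mathcal G$ satisfies $M\le X$, $\dim(X/M)=1$. A top is a set $\mathcal G\langle N]:=\{E\le V\mid E\le N,\ \dim(N/E)=1\}$, where $N\le V$ is a subspace for which some $X\in\mathcal G$ satisfies $X\le N$, $\dim(N/X)=1$. *)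

theory Defs
  imports Main
begin

text \<open>A left vector space over a (not necessarily commutative) field, i.e. a division ring
  'k, carried by the whole type 'v, with scalar multiplication sc.\<close>

definition left_vs :: "('k::division_ring \<Rightarrow> 'v::ab_group_add \<Rightarrow> 'v) \<Rightarrow> bool" where
  "left_vs sc \<longleftrightarrow>
     (\<forall>k a b. sc k (a + b) = sc k a + sc k b) \<and>
     (\<forall>k l a. sc (k + l) a = sc k a + sc l a) \<and>
     (\<forall>k l a. sc (k * l) a = sc k (sc l a)) \<and>
     (\<forall>a. sc 1 a = a)"

definition subsp :: "('k::division_ring \<Rightarrow> 'v::ab_group_add \<Rightarrow> 'v) \<Rightarrow> 'v set \<Rightarrow> bool" where
  "subsp sc X \<longleftrightarrow> 0 \<in> X \<and> (\<forall>a\<in>X. \<forall>b\<in>X. a + b \<in> X) \<and> (\<forall>k. \<forall>a\<in>X. sc k a \<in> X)"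

definition ssum :: "'v::ab_group_add set \<Rightarrow> 'v set \<Rightarrow> 'v set" where
  "ssum X Y = {x + y | x y. x \<in> X \<and> y \<in> Y}"

text \<open>The span of two vectors; dim V > 2 means no two vectors span V.\<close>
definition span2 :: "('k::division_ring \<Rightarrow> 'v::ab_group_add \<Rightarrow> 'v) \<Rightarrow> 'v \<Rightarrow> 'v \<Rightarrow> 'v set" where
  "span2 sc a b = {sc k a + sc l b | k l. True}"

definition dim_gt2 :: "('k::division_ring \<Rightarrow> 'v::ab_group_add \<Rightarrow> 'v) \<Rightarrow> bool" where
  "dim_gt2 sc \<longleftrightarrow> (\<forall>a b. span2 sc a b \<noteq> UNIV)"

text \<open>The quotient space V/X: its elements are the cosets a + X, with the induced operations.\<close>
definition coset :: "'v::ab_group_add set \<Rightarrow> 'v \<Rightarrow> 'v set" where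
  "coset X a = {a + x | x. x \<in> X}"

definition quot :: "'v::ab_group_add set \<Rightarrow> 'v set set" where
  "quot X = range (coset X)"

definition qadd :: "'v::ab_group_add set \<Rightarrow> 'v set \<Rightarrow> 'v set" where
  "qadd A B = {u + w | u w. u \<in> A \<and> w \<in> B}"

definition qscale :: "('k::division_ring \<Rightarrow> 'v::ab_group_add \<Rightarrow> 'v) \<Rightarrow> 'v set \<Rightarrow> 'k \<Rightarrow> 'v set \<Rightarrow> 'v set" where
  "qscale sc X k A = {sc k u + x | u x. u \<in> A \<and> x \<in> X}"

definition iso_quot :: "('k::division_ring \<Rightarrow> 'v::ab_group_add \<Rightarrow> 'v) \<Rightarrow> 'v set \<Rightarrow> bool" where
  "iso_quot sc X \<longleftrightarrow> (\<exists>f. bij_betw f X (quot X) \<and>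
      (\<forall>a\<in>X. \<forall>b\<in>X. f (a + b) = qadd (f a) (f b)) \<and>
      (\<forall>k. \<forall>a\<in>X. f (sc k a) = qscale sc X k (f a)))"

definition GG :: "('k::division_ring \<Rightarrow> 'v::ab_group_add \<Rightarrow> 'v) \<Rightarrow> 'v set set" where
  "GG sc = {X. subsp sc X \<and> iso_quot sc X}"

text \<open>For subspaces M \<subseteq> E: dim(E/M) = 1, i.e. E/M has a basis consisting of one
  (nonzero) coset v + M.\<close>
definition codim1 :: "('k::division_ring \<Rightarrow> 'v::ab_group_add \<Rightarrow> 'v) \<Rightarrow> 'v set \<Rightarrow> 'v set \<Rightarrow> bool" where
  "codim1 sc M E \<longleftrightarrow> M \<subseteq> E \<and> (\<exists>v\<in>E. v \<notin> M \<and> E = {sc k v + m | k m. m \<in> M})"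

definition adjacent :: "('k::division_ring \<Rightarrow> 'v::ab_group_add \<Rightarrow> 'v) \<Rightarrow> 'v set \<Rightarrow> 'v set \<Rightarrow> bool" where
  "adjacent sc X Y \<longleftrightarrow> codim1 sc X (ssum X Y) \<and> codim1 sc Y (ssum X Y)"

definition star :: "('k::division_ring \<Rightarrow> 'v::ab_group_add \<Rightarrow> 'v) \<Rightarrow> 'v set \<Rightarrow> 'v set set" where
  "star sc M = {E. subsp sc E \<and> M \<subseteq> E \<and> codim1 sc M E}"

definition top :: "('k::division_ring \<Rightarrow> 'v::ab_group_add \<Rightarrow> 'v) \<Rightarrow> 'v set \<Rightarrow> 'v set set" where
  "top sc N = {E. subsp sc E \<and> E \<subseteq> N \<and> codim1 sc E N}"

definition is_star :: "('k::division_ring \<Rightarrow> 'v::ab_group_add \<Rightarrow> 'v) \<Rightarrow> 'v set set \<Rightarrow> bool" where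
  "is_star sc S \<longleftrightarrow> (\<exists>M. subsp sc M \<and> (\<exists>X\<in>GG sc. M \<subseteq> X \<and> codim1 sc M X) \<and> S = star sc M)"

definition is_top :: "('k::division_ring \<Rightarrow> 'v::ab_group_add \<Rightarrow> 'v) \<Rightarrow> 'v set set \<Rightarrow> bool" where
  "is_top sc S \<longleftrightarrow> (\<exists>N. subsp sc N \<and> (\<exists>X\<in>GG sc. X \<subseteq> N \<and> codim1 sc X N) \<and> S = top sc N)"

end

theory Submission
  imports Defs
begin

definition lin :: "('k::division_ring \<Rightarrow> 'v::ab_group_add \<Rightarrow> 'v) \<Rightarrow> 'v set \<Rightarrow> 'v \<Rightarrow> 'v set" where
  "lin sc M v = {sc k v + m | k m. m \<in> M}"

locale lvs =
  fixes sc :: "'k::division_ring \<Rightarrow> 'v::ab_group_add \<Rightarrow> 'v"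
  assumes lv: "left_vs sc"
begin

lemma add: "sc k (a + b) = sc k a + sc k b" using lv unfolding left_vs_def by blast
lemma addk: "sc (k + l) a = sc k a + sc l a" using lv unfolding left_vs_def by blast
lemma mult: "sc (k * l) a = sc k (sc l a)" using lv unfolding left_vs_def by blast
lemma one: "sc 1 a = a" using lv unfolding left_vs_def by blast

lemma zero_v[simp]: "sc k 0 = 0"
proof -
  have "sc k 0 = sc k 0 + sc k 0" using add[of k 0 0] by (simp only: add_0)
  then show ?thesis by (metis add_cancel_right_right)
qed
lemma zero_k[simp]: "sc 0 a = 0"
proof -
  have "sc 0 a = sc 0 a + sc 0 a" using addk[of 0 0 a] by (simp only: add_0)
  then show ?thesis by (metis add_cancel_right_right)
qed
lemma minus_v: "sc k (- a) = - sc k a"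
  using add[of k "-a" a] by (simp add: eq_neg_iff_add_eq_0)
lemma diff_v: "sc k (a - b) = sc k a - sc k b"
  using add[of k a "-b"] minus_v by simp
lemma minus_k: "sc (- k) a = - sc k a"
  using addk[of "-k" k a] by (simp add: eq_neg_iff_add_eq_0)

lemma subsp_neg: "subsp sc X \<Longrightarrow> a \<in> X \<Longrightarrow> - a \<in> X"
  unfolding subsp_def using minus_k[of 1 a] one by metis
lemma subsp_add: "subsp sc X \<Longrightarrow> a \<in> X \<Longrightarrow> b \<in> X \<Longrightarrow> a + b \<in> X"
  unfolding subsp_def by blast
lemma subsp_sc: "subsp sc X \<Longrightarrow> a \<in> X \<Longrightarrow> sc k a \<in> X"
  unfolding subsp_def by blast
lemma subsp_diff: "subsp sc X \<Longrightarrow> a \<in> X \<Longrightarrow> b \<in> X \<Longrightarrow> a - b \<in> X"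
  using subsp_add subsp_neg by (metis diff_conv_add_uminus)

lemma subsp_Int: "subsp sc X \<Longrightarrow> subsp sc Y \<Longrightarrow> subsp sc (X \<inter> Y)"
  unfolding subsp_def by blast

lemma ssum_subsp: "subsp sc X \<Longrightarrow> subsp sc Y \<Longrightarrow> subsp sc (ssum X Y)"
  unfolding subsp_def ssum_def
proof (intro conjI ballI allI)
  assume X: "0 \<in> X \<and> (\<forall>a\<in>X. \<forall>b\<in>X. a + b \<in> X) \<and> (\<forall>k. \<forall>a\<in>X. sc k a \<in> X)"
    and Y: "0 \<in> Y \<and> (\<forall>a\<in>Y. \<forall>b\<in>Y. a + b \<in> Y) \<and> (\<forall>k. \<forall>a\<in>Y. sc k a \<in> Y)"
  show "0 \<in> {x + y |x y. x \<in> X \<and> y \<in> Y}" using X Y by force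
  fix a b assume "a \<in> {x + y |x y. x \<in> X \<and> y \<in> Y}" "b \<in> {x + y |x y. x \<in> X \<and> y \<in> Y}"
  then obtain x1 y1 x2 y2 where "a = x1 + y1" "b = x2 + y2" "x1 \<in> X" "x2 \<in> X" "y1 \<in> Y" "y2 \<in> Y" by blast
  then show "a + b \<in> {x + y |x y. x \<in> X \<and> y \<in> Y}" using X Y
    by (intro CollectI exI[of _ "x1 + x2"] exI[of _ "y1 + y2"]) (auto simp: algebra_simps)
next
  fix k a
  assume X: "0 \<in> X \<and> (\<forall>a\<in>X. \<forall>b\<in>X. a + b \<in> X) \<and> (\<forall>k. \<forall>a\<in>X. sc k a \<in> X)"
    and Y: "0 \<in> Y \<and> (\<forall>a\<in>Y. \<forall>b\<in>Y. a + b \<in> Y) \<and> (\<forall>k. \<forall>a\<in>Y. sc k a \<in> Y)"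
    and "a \<in> {x + y |x y. x \<in> X \<and> y \<in> Y}"
  then obtain x1 y1 where "a = x1 + y1" "x1 \<in> X" "y1 \<in> Y" by blast
  then show "sc k a \<in> {x + y |x y. x \<in> X \<and> y \<in> Y}" using X Y add by blast
qed

lemma ssum_comm: "ssum X Y = ssum Y X"
proof -
  have "\<And>X Y. ssum X Y \<subseteq> ssum Y X"
  proof
    fix X Y z assume "z \<in> ssum X Y"
    then obtain x y where "z = x + y" "x \<in> X" "y \<in> Y" unfolding ssum_def by blast
    then have "z = y + x" by (simp add: add.commute)
    then show "z \<in> ssum Y X" unfolding ssum_def using \<open>x \<in> X\<close> \<open>y \<in> Y\<close> by blast
  qed
  then show ?thesis by blast
qed

lemma ssum_left: "subsp sc Y \<Longrightarrow> X \<subseteq> ssum X Y"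
  unfolding ssum_def subsp_def by force
lemma ssum_right: "subsp sc X \<Longrightarrow> Y \<subseteq> ssum X Y"
  unfolding ssum_def subsp_def by force
lemma ssum_least: "subsp sc Z \<Longrightarrow> X \<subseteq> Z \<Longrightarrow> Y \<subseteq> Z \<Longrightarrow> ssum X Y \<subseteq> Z"
  unfolding ssum_def subsp_def by blast
lemma ssum_sub: "subsp sc X \<Longrightarrow> subsp sc Y \<Longrightarrow> Y \<subseteq> X \<Longrightarrow> ssum X Y = X"
  using ssum_left ssum_least by blast

lemma lin_subsp: "subsp sc M \<Longrightarrow> subsp sc (lin sc M v)"
  unfolding subsp_def lin_def
proof (intro conjI ballI allI)
  assume M: "0 \<in> M \<and> (\<forall>a\<in>M. \<forall>b\<in>M. a + b \<in> M) \<and> (\<forall>k. \<forall>a\<in>M. sc k a \<in> M)"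
  show "0 \<in> {sc k v + m |k m. m \<in> M}" using M by (intro CollectI exI[of _ 0]) auto
  fix a b assume "a \<in> {sc k v + m |k m. m \<in> M}" "b \<in> {sc k v + m |k m. m \<in> M}"
  then obtain k1 m1 k2 m2 where "a = sc k1 v + m1" "b = sc k2 v + m2" "m1 \<in> M" "m2 \<in> M" by blast
  then show "a + b \<in> {sc k v + m |k m. m \<in> M}" using M
    by (intro CollectI exI[of _ "k1 + k2"] exI[of _ "m1 + m2"]) (auto simp: algebra_simps addk)
next
  fix k a
  assume M: "0 \<in> M \<and> (\<forall>a\<in>M. \<forall>b\<in>M. a + b \<in> M) \<and> (\<forall>k. \<forall>a\<in>M. sc k a \<in> M)"
    and "a \<in> {sc k v + m |k m. m \<in> M}"
  then obtain k1 m1 where "a = sc k1 v + m1" "m1 \<in> M" by blast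
  then show "sc k a \<in> {sc k v + m |k m. m \<in> M}" using M
    by (intro CollectI exI[of _ "k * k1"] exI[of _ "sc k m1"]) (auto simp: add mult)
qed

lemma codim1_lin: "codim1 sc M E \<longleftrightarrow> M \<subseteq> E \<and> (\<exists>v\<in>E. v \<notin> M \<and> E = lin sc M v)"
  unfolding codim1_def lin_def by simp

lemma lin_sub: "subsp sc E \<Longrightarrow> M \<subseteq> E \<Longrightarrow> v \<in> E \<Longrightarrow> lin sc M v \<subseteq> E"
  unfolding lin_def using subsp_add subsp_sc by blast

lemma K1:
  assumes M: "subsp sc M" and c: "codim1 sc M E" and w: "w \<in> E" "w \<notin> M"
  shows "E = lin sc M w"
proof -
  from c obtain v where v: "v \<in> E" "v \<notin> M" "E = lin sc M v" "M \<subseteq> E" unfolding codim1_lin by blast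
  have Es: "subsp sc E" unfolding v(3) by (rule lin_subsp[OF M])
  from w v(3) obtain k m where km: "w = sc k v + m" "m \<in> M" unfolding lin_def by blast
  have k0: "k \<noteq> 0"
  proof
    assume "k = 0"
    then have "w = m" using km(1) by simp
    then show False using km(2) w(2) by blast
  qed
  have "sc (inverse k) w = sc (inverse k) (sc k v) + sc (inverse k) m"
    using km(1) add by simp
  also have "sc (inverse k) (sc k v) = v"
    using mult[of "inverse k" k v, symmetric] k0 one by simp
  finally have vv: "v = sc (inverse k) w - sc (inverse k) m"
    by (simp add: algebra_simps)
  show ?thesis
  proof
    show "lin sc M w \<subseteq> E" using lin_sub Es v(4) w(1) by blast
    show "E \<subseteq> lin sc M w"
    proof
      fix e assume "e \<in> E"
      then obtain l m' where lm: "e = sc l v + m'" "m' \<in> M" using v(3) unfolding lin_def by blast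
      have "sc l v = sc l (sc (inverse k) w) - sc l (sc (inverse k) m)"
        using vv diff_v by metis
      then have "e = sc (l * inverse k) w + (m' - sc l (sc (inverse k) m))"
        using lm(1) mult[of l "inverse k" w] by (simp add: algebra_simps)
      moreover have "m' - sc l (sc (inverse k) m) \<in> M"
        by (rule subsp_diff[OF M lm(2) subsp_sc[OF M subsp_sc[OF M km(2)]]])
      ultimately show "e \<in> lin sc M w" unfolding lin_def by blast
    qed
  qed
qed

lemma K2:
  assumes M: "subsp sc M" and c: "codim1 sc M E" and F: "subsp sc F" "M \<subseteq> F" "F \<subseteq> E" "F \<noteq> M"
  shows "F = E"
proof -
  obtain w where w: "w \<in> F" "w \<notin> M" using F by blast
  have "E = lin sc M w" using K1[OF M c] w F by blast
  then have "E \<subseteq> F" using lin_sub F w by blast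
  then show ?thesis using F by blast
qed

lemma codim1_ne: "codim1 sc M E \<Longrightarrow> E \<noteq> M"
  unfolding codim1_def by blast

lemma K3:
  assumes X: "subsp sc X" and Y: "subsp sc Y" and c: "codim1 sc X (ssum X Y)"
  shows "codim1 sc (X \<inter> Y) Y"
proof -
  have "\<not> Y \<subseteq> X" using ssum_sub[OF X Y] codim1_ne[OF c] by blast
  then obtain y where y: "y \<in> Y" "y \<notin> X" by blast
  have yS: "y \<in> ssum X Y" using ssum_right[OF X] y by blast
  have E: "ssum X Y = lin sc X y" using K1[OF X c yS y(2)] .
  have "Y = lin sc (X \<inter> Y) y"
  proof
    show "lin sc (X \<inter> Y) y \<subseteq> Y" using lin_sub[OF Y _ y(1)] by blast
    show "Y \<subseteq> lin sc (X \<inter> Y) y"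
    proof
      fix z assume z: "z \<in> Y"
      then have "z \<in> lin sc X y" using E ssum_right[OF X] by blast
      then obtain k m where km: "z = sc k y + m" "m \<in> X" unfolding lin_def by blast
      have "m = z - sc k y" using km by simp
      then have "m \<in> Y" using subsp_diff[OF Y z subsp_sc[OF Y y(1)]] by simp
      then show "z \<in> lin sc (X \<inter> Y) y" using km unfolding lin_def by blast
    qed
  qed
  then show ?thesis unfolding codim1_lin using y by blast
qed

end

theorem lemma2p3:
  fixes sc :: "'k::division_ring \<Rightarrow> 'v::ab_group_add \<Rightarrow> 'v"
  assumes "left_vs sc"
    and "dim_gt2 sc"
    and "GG sc \<noteq> {}"
    and "A \<in> GG sc" and "B \<in> GG sc" and "C \<in> GG sc"
    and "adjacent sc A B" and "adjacent sc A C" and "adjacent sc B C"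
  shows "\<exists>S. (is_star sc S \<or> is_top sc S) \<and> A \<in> S \<and> B \<in> S \<and> C \<in> S"
proof -
  interpret lvs sc using assms(1) by unfold_locales
  have A: "subsp sc A" and B: "subsp sc B" and C: "subsp sc C" using assms(4-6) unfolding GG_def by auto
  have ab1: "codim1 sc A (ssum A B)" and ab2: "codim1 sc B (ssum A B)"
    and ac1: "codim1 sc A (ssum A C)" and ac2: "codim1 sc C (ssum A C)"
    and bc1: "codim1 sc B (ssum B C)" and bc2: "codim1 sc C (ssum B C)"
    using assms(7-9) unfolding adjacent_def by auto
  have SAB: "subsp sc (ssum A B)" "subsp sc (ssum A C)" "subsp sc (ssum B C)"
    using ssum_subsp A B C by auto
  show ?thesis
  proof (cases "C \<subseteq> ssum A B")
    case True
    have e1: "ssum A C = ssum A B"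
      using K2[OF A ab1 SAB(2) ssum_left[OF C] ssum_least[OF SAB(1) ssum_left[OF B] True]]
        codim1_ne[OF ac1] by blast
    have e2: "ssum B C = ssum A B"
      using K2[OF B ab2 SAB(3) ssum_left[OF C] ssum_least[OF SAB(1) ssum_right[OF A] True]]
        codim1_ne[OF bc1] by blast
    have cc: "codim1 sc C (ssum A B)" using bc2 e2 by simp
    let ?S = "top sc (ssum A B)"
    have "is_top sc ?S" unfolding is_top_def using SAB(1) assms(4) ab1 ssum_left[OF B] by blast
    moreover have "A \<in> ?S" "B \<in> ?S" "C \<in> ?S" unfolding top_def
      using A B C ab1 ab2 cc True ssum_left[OF B] ssum_right[OF A] by auto
    ultimately show ?thesis by blast
  next
    case False
    then obtain c where c: "c \<in> C" "c \<notin> ssum A B" by blast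
    have cA: "c \<notin> A" using c ssum_left[OF B] by blast
    have cB: "c \<notin> B" using c ssum_right[OF A] by blast
    have LA: "ssum A C = lin sc A c" using K1[OF A ac1 _ cA] c ssum_right[OF A] by blast
    have LB: "ssum B C = lin sc B c" using K1[OF B bc1 _ cB] c ssum_right[OF B] by blast
    have ABC: "A \<inter> B \<subseteq> C"
    proof
      fix x assume x: "x \<in> A \<inter> B"
      show "x \<in> C"
      proof (rule ccontr)
        assume xC: "x \<notin> C"
        have "ssum A C = lin sc C x" using K1[OF C ac2 _ xC] x ssum_left[OF C] by blast
        moreover have "ssum B C = lin sc C x" using K1[OF C bc2 _ xC] x ssum_left[OF C] by blast
        ultimately have "B \<subseteq> ssum A C" using ssum_left[OF C, of B] by simp
        then have sub: "ssum A B \<subseteq> ssum A C" using ssum_least[OF SAB(2) ssum_left[OF C]] by blast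
        have "ssum A B = ssum A C"
          using K2[OF A ac1 SAB(1) ssum_left[OF B] sub] codim1_ne[OF ab1] by blast
        then show False using c ssum_right[OF A, of C] by blast
      qed
    qed
    have cAB_B: "codim1 sc (A \<inter> B) B" using K3[OF A B ab1] .
    have cAB_A: "codim1 sc (A \<inter> B) A" using K3[OF B A] ab2 ssum_comm[of A B] by (simp add: Int_commute)
    have cBC: "codim1 sc (B \<inter> C) C" using K3[OF B C bc1] .
    have "B \<inter> C = A \<inter> B"
    proof (rule ccontr)
      assume ne: "B \<inter> C \<noteq> A \<inter> B"
      have "B \<inter> C = B" using K2[OF subsp_Int[OF A B] cAB_B subsp_Int[OF B C] _ _ ne] ABC by blast
      then have "B \<subseteq> C" by blast
      then have "ssum B C = C" using ssum_sub[OF C B] ssum_comm by metis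
      then show False using codim1_ne[OF bc2] by simp
    qed
    then have cC: "codim1 sc (A \<inter> B) C" using cBC by simp
    let ?S = "star sc (A \<inter> B)"
    have "is_star sc ?S" unfolding is_star_def using subsp_Int[OF A B] assms(4) cAB_A by blast
    moreover have "A \<in> ?S" "B \<in> ?S" "C \<in> ?S" unfolding star_def
      using A B C cAB_A cAB_B cC ABC by auto
    ultimately show ?thesis by blast
  qed
qed

end
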